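(* Let $M\in\mathrm{rep}\,G_{m,n}$ be arbitrary, let $\ast\in\{ss,cc,tot\}$, and let $i,j$ be vertices of $G_{m,n}$ such that there is a path from $i$ to $j$. Then $$\sum_{I\in\mathbb{I}_{m,n}}\tilde d^\ast_M(I)\cdot\operatorname{rank} V_I(i\to j)=\operatorname{rank} M(i\to j).$$
   Context: Fix a field $K$. For integers $m,n\ge1$, $G_{m,n}$ is the equioriented commutative $m\times n$ grid: the quiver with vertex set $\{(i,j):1\le i\le m,\ 1\le j\le n\}$ and arrows $(i,j)\to(i,j+1)$ and $(i,j)\to(i+1,j)$, bound by all commutativity relations; $\mathrm{rep}\,G_{m,n}$ is its category of finite-dimensional representations over $K$ satisfying the relations. For vertices $s,t$ with a path from $s$ to $t$, $M(s\to t)$ is the composite linear map along any such path (identity if $s=t$). An interval of $G_{m,n}$ is a nonempty full subquiver $I$ which is connected (as an undirected graph) and convex (whenever $x,y\in I_0$ and there are paths $x\to z$, $z\to y$ in $G_{m,n}$, then $z\in I_0$); $\mathbb{I}_{m,n}$ is the set of intervals ordered by inclusion of vertex sets. The interval representation $V_I$ has $K$ at vertices of $I$, $0$ elsewhere, identity maps on arrows inside $I$ and zero maps otherwise. Essential vertices: $I^{ss}_0$ is the set of sources and sinks of the quiver $I$; $I^{cc}_0=I_0\cap(\mathrm{pr}_1(I^{ss}_0)\times\mathrm{pr}_2(I^{ss}_0))$ with $\mathrm{pr}_1,\mathrm{pr}_2$ coordinate projections; $I^{tot}_0=I_0$. Let $KG_{m,n}$ be the $K$-linear category whose objects are the vertices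 and whose morphisms are $K$-linear combinations of paths modulo the commutativity relations; representations are $K$-linear functors $KG_{m,n}\to\mathrm{vect}_K$. For $\ast\in\{ss,cc,tot\}$, $\mathcal{C}^\ast_I$ is the full subcategory of $KG_{m,n}$ on $I^\ast_0$, and $M^\ast_I:=M|_{\mathcal{C}^\ast_I}$. The compressed multiplicity $\bar d^\ast_M(I)$ is the multiplicity of the indecomposable $(V_I)^\ast_I$ as a direct summand of $M^\ast_I$. Let $\mu$ be the Möbius function of the finite poset $\mathbb{I}_{m,n}$ ($\mu([I,I])=1$, $\mu([I,J])=-\sum_{I\le L<J}\mu([I,L])$ for $I<J$), and $\tilde d^\ast_M(I):=\sum_{J\ge I}\mu([I,J])\,\bar d^\ast_M(J)$. *)

theory Defs
  imports "Jordan_Normal_Form.DL_Rank"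
begin

type_synonym vertex = "nat \<times> nat"

definition grid_vertices :: "nat \<Rightarrow> nat \<Rightarrow> vertex set" where
  "grid_vertices m n = {(i, j). 1 \<le> i \<and> i \<le> m \<and> 1 \<le> j \<and> j \<le> n}"

definition grid_arrow :: "nat \<Rightarrow> nat \<Rightarrow> vertex \<Rightarrow> vertex \<Rightarrow> bool" where
  "grid_arrow m n x y \<longleftrightarrow> x \<in> grid_vertices m n \<and> y \<in> grid_vertices m n \<and>
     ((fst y = fst x \<and> snd y = snd x + 1) \<or> (fst y = fst x + 1 \<and> snd y = snd x))"

definition grid_path :: "nat \<Rightarrow> nat \<Rightarrow> vertex \<Rightarrow> vertex \<Rightarrow> bool" where
  "grid_path m n x y \<longleftrightarrow> x \<in> grid_vertices m n \<and> (grid_arrow m n)\<^sup>*\<^sup>* x y"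

text \<open>A representation: a dimension at each vertex (the space is K^d), a matrix for each
  horizontal arrow (i,j)->(i,j+1) and each vertical arrow (i,j)->(i+1,j).
  Values outside the grid are irrelevant.\<close>
record 'k grid_rep =
  rdim :: "vertex \<Rightarrow> nat"
  hmap :: "vertex \<Rightarrow> 'k mat"
  vmap :: "vertex \<Rightarrow> 'k mat"

definition is_grid_rep :: "nat \<Rightarrow> nat \<Rightarrow> 'k::field grid_rep \<Rightarrow> bool" where
  "is_grid_rep m n M \<longleftrightarrow>
     (\<forall>i j. 1 \<le> i \<and> i \<le> m \<and> 1 \<le> j \<and> j < n \<longrightarrow>
        hmap M (i, j) \<in> carrier_mat (rdim M (i, j + 1)) (rdim M (i, j))) \<and>
     (\<forall>i j. 1 \<le> i \<and> i < m \<and> 1 \<le> j \<and> j \<le> n \<longrightarrow>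
        vmap M (i, j) \<in> carrier_mat (rdim M (i + 1, j)) (rdim M (i, j))) \<and>
     (\<forall>i j. 1 \<le> i \<and> i < m \<and> 1 \<le> j \<and> j < n \<longrightarrow>
        hmap M (i + 1, j) * vmap M (i, j) = vmap M (i, j + 1) * hmap M (i, j))"

fun hcomp :: "'k::field grid_rep \<Rightarrow> nat \<Rightarrow> nat \<Rightarrow> nat \<Rightarrow> 'k mat" where
  "hcomp M i j 0 = 1\<^sub>m (rdim M (i, j))"
| "hcomp M i j (Suc l) = hmap M (i, j + l) * hcomp M i j l"

fun vcomp :: "'k::field grid_rep \<Rightarrow> nat \<Rightarrow> nat \<Rightarrow> nat \<Rightarrow> 'k mat" where
  "vcomp M i j 0 = 1\<^sub>m (rdim M (i, j))"
| "vcomp M i j (Suc l) = vmap M (i + l, j) * vcomp M i j l"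

text \<open>M(s -> t): composite along the path going first down column snd s, then along
  row fst t (by commutativity, equal to the composite along any path from s to t).\<close>
definition path_map :: "'k::field grid_rep \<Rightarrow> vertex \<Rightarrow> vertex \<Rightarrow> 'k mat" where
  "path_map M s t = hcomp M (fst t) (snd s) (snd t - snd s) * vcomp M (fst s) (snd s) (fst t - fst s)"

definition mat_rank :: "'k::field mat \<Rightarrow> nat" where
  "mat_rank A = vec_space.rank (dim_row A) A"

definition sub_arrow :: "nat \<Rightarrow> nat \<Rightarrow> vertex set \<Rightarrow> vertex \<Rightarrow> vertex \<Rightarrow> bool" where
  "sub_arrow m n I x y \<longleftrightarrow> x \<in> I \<and> y \<in> I \<and> grid_arrow m n x y"

definition is_interval :: "nat \<Rightarrow> nat \<Rightarrow> vertex set \<Rightarrow> bool" where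
  "is_interval m n I \<longleftrightarrow>
     I \<noteq> {} \<and> I \<subseteq> grid_vertices m n \<and>
     (\<forall>x\<in>I. \<forall>y\<in>I. (\<lambda>a b. sub_arrow m n I a b \<or> sub_arrow m n I b a)\<^sup>*\<^sup>* x y) \<and>
     (\<forall>x\<in>I. \<forall>y\<in>I. \<forall>z. grid_path m n x z \<and> grid_path m n z y \<longrightarrow> z \<in> I)"

definition intervals :: "nat \<Rightarrow> nat \<Rightarrow> vertex set set" where
  "intervals m n = {I. is_interval m n I}"

definition interval_rep :: "vertex set \<Rightarrow> 'k::field grid_rep" where
  "interval_rep I = \<lparr> rdim = (\<lambda>x. if x \<in> I then 1 else 0),
     hmap = (\<lambda>(i, j). if (i, j) \<in> I \<and> (i, j + 1) \<in> I then 1\<^sub>m 1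
                      else 0\<^sub>m (if (i, j + 1) \<in> I then 1 else 0) (if (i, j) \<in> I then 1 else 0)),
     vmap = (\<lambda>(i, j). if (i, j) \<in> I \<and> (i + 1, j) \<in> I then 1\<^sub>m 1
                      else 0\<^sub>m (if (i + 1, j) \<in> I then 1 else 0) (if (i, j) \<in> I then 1 else 0)) \<rparr>"

datatype ess_kind = SS | CC | TOT

definition ss_vertices :: "nat \<Rightarrow> nat \<Rightarrow> vertex set \<Rightarrow> vertex set" where
  "ss_vertices m n I = {x \<in> I. (\<not> (\<exists>y. sub_arrow m n I y x)) \<or> (\<not> (\<exists>y. sub_arrow m n I x y))}"

definition ess_vertices :: "nat \<Rightarrow> nat \<Rightarrow> ess_kind \<Rightarrow> vertex set \<Rightarrow> vertex set" where
  "ess_vertices m n k I = (case k of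
      SS \<Rightarrow> ss_vertices m n I
    | CC \<Rightarrow> I \<inter> (fst ` ss_vertices m n I \<times> snd ` ss_vertices m n I)
    | TOT \<Rightarrow> I)"

fun mat_pow_sum :: "nat \<Rightarrow> 'k::field mat \<Rightarrow> 'k mat" where
  "mat_pow_sum 0 A = 0\<^sub>m 0 0"
| "mat_pow_sum (Suc k) A = four_block_mat A (0\<^sub>m (dim_row A) (k * dim_col A))
       (0\<^sub>m (k * dim_row A) (dim_col A)) (mat_pow_sum k A)"

text \<open>The restriction of N to the full subcategory on S, taken k times (N^k), is a direct
  summand of the restriction of M to S: there are morphisms f : N^k -> M and g : M -> N^k
  (natural w.r.t. all morphisms s -> t of the subcategory) with g o f = id.\<close>
definition summand_pow :: "nat \<Rightarrow> nat \<Rightarrow> vertex set \<Rightarrow> nat \<Rightarrow> 'k::field grid_rep \<Rightarrow> 'k grid_rep \<Rightarrow> bool" where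
  "summand_pow m n S k N M \<longleftrightarrow>
     (\<exists>f g. (\<forall>s\<in>S. f s \<in> carrier_mat (rdim M s) (k * rdim N s) \<and>
                    g s \<in> carrier_mat (k * rdim N s) (rdim M s) \<and>
                    g s * f s = 1\<^sub>m (k * rdim N s)) \<and>
            (\<forall>s\<in>S. \<forall>t\<in>S. grid_path m n s t \<longrightarrow>
                    path_map M s t * f s = f t * mat_pow_sum k (path_map N s t) \<and>
                    g t * path_map M s t = mat_pow_sum k (path_map N s t) * g s))"

definition summand_mult :: "nat \<Rightarrow> nat \<Rightarrow> vertex set \<Rightarrow> 'k::field grid_rep \<Rightarrow> 'k grid_rep \<Rightarrow> nat" where
  "summand_mult m n S N M = (GREATEST k. summand_pow m n S k N M)"

definition compressed_mult :: "nat \<Rightarrow> nat \<Rightarrow> ess_kind \<Rightarrow> 'k::field grid_rep \<Rightarrow> vertex set \<Rightarrow> nat" where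
  "compressed_mult m n k M I = summand_mult m n (ess_vertices m n k I) (interval_rep I) M"

function mobius :: "nat \<Rightarrow> nat \<Rightarrow> vertex set \<Rightarrow> vertex set \<Rightarrow> int" where
  "mobius m n I J = (if I = J then 1
     else if I \<subset> J \<and> finite J
       then - (\<Sum>L \<in> {L. is_interval m n L \<and> I \<subseteq> L \<and> L \<subset> J}. mobius m n I L)
     else 0)"
  by auto
termination
  by (relation "measure (\<lambda>(m, n, I, J). card J)") (auto intro: psubset_card_mono)

definition tilde_mult :: "nat \<Rightarrow> nat \<Rightarrow> ess_kind \<Rightarrow> 'k::field grid_rep \<Rightarrow> vertex set \<Rightarrow> int" where
  "tilde_mult m n k M I =
     (\<Sum>J \<in> {J \<in> intervals m n. I \<subseteq> J}. mobius m n I J * int (compressed_mult m n k M J))"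

end

theory Submission
  imports Defs
begin


lemma vert_path:
  fixes a b p :: nat
  shows "(\<And>t. t < p \<Longrightarrow> P (a+t, b) (a+t+1, b)) \<Longrightarrow> P\<^sup>*\<^sup>* (a,b) (a+p,b)"
proof (induction p)
  case 0 then show ?case by simp
next
  case (Suc p)
  then have "P\<^sup>*\<^sup>* (a,b) (a+p,b)" by simp
  moreover have "P (a+p, b) (a+p+1, b)" using Suc.prems by simp
  ultimately show ?case by simp
qed

lemma horiz_path:
  fixes a b q :: nat
  shows "(\<And>t. t < q \<Longrightarrow> P (a, b+t) (a, b+t+1)) \<Longrightarrow> P\<^sup>*\<^sup>* (a,b) (a,b+q)"
proof (induction q)
  case 0 then show ?case by simp
next
  case (Suc q)
  then have "P\<^sup>*\<^sup>* (a,b) (a,b+q)" by simp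
  moreover have "P (a, b+q) (a, b+q+1)" using Suc.prems by simp
  ultimately show ?case by simp
qed

definition rect :: "vertex \<Rightarrow> vertex \<Rightarrow> vertex set" where
  "rect x y = {z. fst x \<le> fst z \<and> fst z \<le> fst y \<and> snd x \<le> snd z \<and> snd z \<le> snd y}"

lemma le_path:
  fixes x y :: vertex
  assumes "\<And>z z'. z \<in> rect x y \<Longrightarrow> z' \<in> rect x y \<Longrightarrow>
     ((fst z' = fst z \<and> snd z' = snd z + 1) \<or> (fst z' = fst z + 1 \<and> snd z' = snd z)) \<Longrightarrow> P z z'"
    and "fst x \<le> fst y" "snd x \<le> snd y"
  shows "P\<^sup>*\<^sup>* x y"
proof -
  obtain a b c d where x: "x = (a,b)" and y: "y = (c,d)" by (cases x, cases y)
  have 1: "P\<^sup>*\<^sup>* (a,b) (a+(c-a),b)"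
  proof (rule vert_path)
    fix t assume "t < c - a"
    then show "P (a + t, b) (a + t + 1, b)" using assms(2,3) by (intro assms(1)) (auto simp: x y rect_def)
  qed
  have 2: "P\<^sup>*\<^sup>* (c,b) (c,b+(d-b))"
  proof (rule horiz_path)
    fix t assume "t < d - b"
    then show "P (c, b + t) (c, b + t + 1)" using assms(2,3) by (intro assms(1)) (auto simp: x y rect_def)
  qed
  show ?thesis using 1 2 assms(2,3) x y by simp
qed

lemma grid_path_iff:
  "grid_path m n x y \<longleftrightarrow> x \<in> grid_vertices m n \<and> y \<in> grid_vertices m n \<and> fst x \<le> fst y \<and> snd x \<le> snd y"
proof
  assume "grid_path m n x y"
  then have "x \<in> grid_vertices m n" "(grid_arrow m n)\<^sup>*\<^sup>* x y" by (auto simp: grid_path_def)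
  from this(2) show "x \<in> grid_vertices m n \<and> y \<in> grid_vertices m n \<and> fst x \<le> fst y \<and> snd x \<le> snd y"
    by (induction rule: rtranclp_induct) (use \<open>x \<in> grid_vertices m n\<close> in \<open>auto simp: grid_arrow_def\<close>)
next
  assume a: "x \<in> grid_vertices m n \<and> y \<in> grid_vertices m n \<and> fst x \<le> fst y \<and> snd x \<le> snd y"
  have "(grid_arrow m n)\<^sup>*\<^sup>* x y"
    by (rule le_path) (use a in \<open>auto simp: grid_arrow_def rect_def grid_vertices_def\<close>)
  then show "grid_path m n x y" using a by (simp add: grid_path_def)
qed

lemma finite_grid: "finite (grid_vertices m n)"
proof -
  have "grid_vertices m n \<subseteq> {1..m} \<times> {1..n}" by (auto simp: grid_vertices_def)
  then show ?thesis by (rule finite_subset) simp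
qed

lemma interval_finite: "is_interval m n I \<Longrightarrow> finite I"
  using finite_grid finite_subset is_interval_def by metis

lemma finite_intervals: "finite (intervals m n)"
proof -
  have "intervals m n \<subseteq> Pow (grid_vertices m n)" by (auto simp: intervals_def is_interval_def)
  then show ?thesis using finite_grid by (meson finite_Pow_iff finite_subset)
qed

lemma rect_sub_interval:
  assumes "is_interval m n I" "x \<in> I" "y \<in> I"
  shows "rect x y \<subseteq> I"
proof
  fix z assume z: "z \<in> rect x y"
  have "x \<in> grid_vertices m n" "y \<in> grid_vertices m n" using assms by (auto simp: is_interval_def)
  then have "z \<in> grid_vertices m n" using z by (auto simp: grid_vertices_def rect_def)
  then have "grid_path m n x z" "grid_path m n z y"
    using z \<open>x \<in> grid_vertices m n\<close> \<open>y \<in> grid_vertices m n\<close> by (auto simp: grid_path_iff rect_def)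
  then show "z \<in> I" using assms(1,2,3) unfolding is_interval_def by blast
qed

lemma rect_interval:
  assumes "grid_path m n i j"
  shows "is_interval m n (rect i j)"
proof -
  have g: "i \<in> grid_vertices m n" "j \<in> grid_vertices m n" "fst i \<le> fst j" "snd i \<le> snd j"
    using assms by (auto simp: grid_path_iff)
  have sub: "rect i j \<subseteq> grid_vertices m n" using g by (auto simp: rect_def grid_vertices_def)
  have ii: "i \<in> rect i j" using g by (auto simp: rect_def)
  have reach: "(sub_arrow m n (rect i j))\<^sup>*\<^sup>* i x" if "x \<in> rect i j" for x
  proof (rule le_path)
    fix z z' assume "z \<in> rect i x" "z' \<in> rect i x"
      "(fst z' = fst z \<and> snd z' = snd z + 1) \<or> (fst z' = fst z + 1 \<and> snd z' = snd z)"
    moreover have "z \<in> rect i j" "z' \<in> rect i j" using that \<open>z \<in> rect i x\<close> \<open>z' \<in> rect i x\<close>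
      by (auto simp: rect_def)
    ultimately show "sub_arrow m n (rect i j) z z'" using sub
      by (auto simp: sub_arrow_def grid_arrow_def)
  qed (use that in \<open>auto simp: rect_def\<close>)
  let ?R = "\<lambda>a b. sub_arrow m n (rect i j) a b \<or> sub_arrow m n (rect i j) b a"
  have conn: "?R\<^sup>*\<^sup>* x y" if "x \<in> rect i j" "y \<in> rect i j" for x y
  proof -
    have iy: "?R\<^sup>*\<^sup>* i y" using reach[OF that(2)] by (rule rtranclp_mono[THEN predicate2D, rotated]) auto
    have "?R\<^sup>*\<^sup>* i x" using reach[OF that(1)] by (rule rtranclp_mono[THEN predicate2D, rotated]) auto
    then have "(?R\<inverse>\<inverse>)\<^sup>*\<^sup>* x i" by (rule rtranclp_converseI)
    moreover have "?R\<inverse>\<inverse> = ?R" by (auto simp: fun_eq_iff)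
    ultimately have "?R\<^sup>*\<^sup>* x i" by simp
    then show ?thesis using iy by simp
  qed
  show ?thesis unfolding is_interval_def
    using ii sub conn by (auto simp: grid_path_iff rect_def)
qed




declare mobius.simps[simp del]

lemma ess_rect:
  assumes "grid_path m n i j"
  shows "i \<in> ess_vertices m n k (rect i j)" "j \<in> ess_vertices m n k (rect i j)"
    "ess_vertices m n k (rect i j) \<subseteq> rect i j"
proof -
  have g: "fst i \<le> fst j" "snd i \<le> snd j" using assms by (auto simp: grid_path_iff)
  have iR: "i \<in> rect i j" and jR: "j \<in> rect i j" using g by (auto simp: rect_def)
  have iss: "i \<in> ss_vertices m n (rect i j)"
    using iR by (auto simp: ss_vertices_def sub_arrow_def grid_arrow_def rect_def)
  have jss: "j \<in> ss_vertices m n (rect i j)"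
    using jR by (auto simp: ss_vertices_def sub_arrow_def grid_arrow_def rect_def)
  have ssR: "ss_vertices m n (rect i j) \<subseteq> rect i j" by (auto simp: ss_vertices_def)
  show "i \<in> ess_vertices m n k (rect i j)"
    using iss iR by (cases k) (auto simp: ess_vertices_def mem_Times_iff)
  show "j \<in> ess_vertices m n k (rect i j)"
    using jss jR by (cases k) (auto simp: ess_vertices_def mem_Times_iff)
  show "ess_vertices m n k (rect i j) \<subseteq> rect i j"
    using ssR by (cases k) (auto simp: ess_vertices_def)
qed

definition Iv :: "nat \<Rightarrow> nat \<Rightarrow> vertex set \<Rightarrow> vertex set \<Rightarrow> vertex set set" where
  "Iv m n I J = {L \<in> intervals m n. I \<subseteq> L \<and> L \<subseteq> J}"

lemma finite_Iv: "finite (Iv m n I J)"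
  using finite_intervals[of m n] by (rule finite_subset[rotated]) (auto simp: Iv_def)

lemma mobius_refl: "mobius m n I I = 1"
  by (subst mobius.simps) simp

lemma mobius_sum_left:
  assumes "I \<in> intervals m n" "J \<in> intervals m n" "I \<subseteq> J"
  shows "(\<Sum>L\<in>Iv m n I J. mobius m n I L) = (if I = J then 1 else 0)"
proof (cases "I = J")
  case True
  then have "Iv m n I J = {I}" using assms by (auto simp: Iv_def)
  then show ?thesis using True by (simp add: mobius_refl)
next
  case False
  let ?A = "{L. is_interval m n L \<and> I \<subseteq> L \<and> L \<subset> J}"
  have fJ: "finite J" using assms(2) interval_finite by (auto simp: intervals_def)
  have eq: "Iv m n I J = insert J ?A" using assms by (auto simp: Iv_def intervals_def)
  have fA: "finite ?A" using finite_Iv[of m n I J] eq by auto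
  have "mobius m n I J = - (\<Sum>L\<in>?A. mobius m n I L)"
    using False assms(3) fJ by (subst mobius.simps) auto
  then show ?thesis using False fA by (simp add: eq)
qed

lemma card_less_interval:
  assumes "K \<subset> J" "J \<in> intervals m n"
  shows "card K < card J"
proof -
  have "finite J" using assms(2) interval_finite by (auto simp: intervals_def)
  then show ?thesis by (rule psubset_card_mono[OF _ assms(1)])
qed

lemma mobius_sum_right:
  assumes "I \<in> intervals m n" "J \<in> intervals m n" "I \<subseteq> J"
  shows "(\<Sum>L\<in>Iv m n I J. mobius m n L J) = (if I = J then 1 else 0)"
  using assms
proof (induction "card J - card I" arbitrary: I rule: less_induct)
  case less
  note I = less.prems(1) and J = less.prems(2) and IJ = less.prems(3)
  define h where "h K = (\<Sum>L\<in>Iv m n K J. mobius m n L J)" for K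
  show ?case
  proof (cases "I = J")
    case True
    then have "Iv m n I J = {I}" using I by (auto simp: Iv_def)
    then show ?thesis using True by (simp add: mobius_refl)
  next
    case False
    let ?A = "Iv m n I J"
    have IH: "h K = (if K = J then 1 else 0)" if "K \<in> ?A" "K \<noteq> I" for K
    proof -
      have "I \<subset> K" using that by (auto simp: Iv_def)
      then have "card I < card K" using card_less_interval that by (auto simp: Iv_def)
      moreover have "card K \<le> card J" using that J interval_finite
        by (auto simp: Iv_def intervals_def intro: card_mono)
      ultimately have "card J - card K < card J - card I" by simp
      then show ?thesis unfolding h_def using less.hyps that J by (auto simp: Iv_def)
    qed
    have IvK: "Iv m n K J = {L \<in> ?A. K \<subseteq> L}" if "K \<in> ?A" for K
      using that by (auto simp: Iv_def)
    have IvL: "Iv m n I L = {K \<in> ?A. K \<subseteq> L}" if "L \<in> ?A" for L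
      using that by (auto simp: Iv_def)
    have "(\<Sum>K\<in>?A. mobius m n I K * h K) = (\<Sum>K\<in>?A. \<Sum>L\<in>{L \<in> ?A. K \<subseteq> L}. mobius m n I K * mobius m n L J)"
      unfolding h_def by (rule sum.cong) (auto simp: IvK sum_distrib_left)
    also have "\<dots> = (\<Sum>L\<in>?A. \<Sum>K\<in>{K \<in> ?A. K \<subseteq> L}. mobius m n I K * mobius m n L J)"
      by (rule sum.swap_restrict) (auto simp: finite_Iv)
    also have "\<dots> = (\<Sum>L\<in>?A. (\<Sum>K\<in>Iv m n I L. mobius m n I K) * mobius m n L J)"
      by (rule sum.cong) (auto simp: IvL sum_distrib_right)
    also have "\<dots> = (\<Sum>L\<in>?A. (if I = L then 1 else 0) * mobius m n L J)"
    proof (rule sum.cong[OF refl])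
      fix L assume "L \<in> ?A"
      then have "L \<in> intervals m n" "I \<subseteq> L" by (auto simp: Iv_def)
      then show "(\<Sum>K\<in>Iv m n I L. mobius m n I K) * mobius m n L J = (if I = L then 1 else 0) * mobius m n L J"
        using I by (simp add: mobius_sum_left)
    qed
    also have "\<dots> = (\<Sum>L\<in>?A. if L = I then mobius m n I J else 0)"
      by (rule sum.cong) auto
    also have "\<dots> = mobius m n I J"
      using I IJ finite_Iv[of m n I J] by (subst sum.delta) (auto simp: Iv_def)
    finally have e1: "(\<Sum>K\<in>?A. mobius m n I K * h K) = mobius m n I J" .
    have IA: "I \<in> ?A" using I IJ by (auto simp: Iv_def)
    have JA: "J \<in> ?A - {I}" using J IJ False by (auto simp: Iv_def)
    have "(\<Sum>K\<in>?A. mobius m n I K * h K) = mobius m n I I * h I + (\<Sum>K\<in>?A - {I}. mobius m n I K * h K)"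
      using IA by (simp add: sum.remove finite_Iv)
    also have "(\<Sum>K\<in>?A - {I}. mobius m n I K * h K) = (\<Sum>K\<in>?A - {I}. if K = J then mobius m n I J else 0)"
      by (rule sum.cong) (auto simp: IH)
    also have "\<dots> = mobius m n I J" using JA by (simp add: sum.delta finite_Iv)
    finally have "h I = 0" using e1 by (simp add: mobius_refl)
    then show ?thesis using False unfolding h_def by simp
  qed
qed

lemma mobius_collapse:
  fixes d :: "vertex set \<Rightarrow> int"
  assumes "grid_path m n i j"
  shows "(\<Sum>I\<in>intervals m n. (\<Sum>J\<in>{J\<in>intervals m n. I \<subseteq> J}. mobius m n I J * d J)
            * (if i \<in> I \<and> j \<in> I then 1 else 0)) = d (rect i j)"
proof -
  let ?R = "rect i j"
  let ?Int = "intervals m n"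
  have RI: "?R \<in> ?Int" using rect_interval[OF assms] by (simp add: intervals_def)
  have g: "fst i \<le> fst j" "snd i \<le> snd j" using assms by (auto simp: grid_path_iff)
  have iR: "i \<in> ?R" "j \<in> ?R" using g by (auto simp: rect_def)
  have iff: "(i \<in> I \<and> j \<in> I) \<longleftrightarrow> ?R \<subseteq> I" if "I \<in> ?Int" for I
    using rect_sub_interval[of m n I i j] that iR by (auto simp: intervals_def)
  have fin: "finite ?Int" by (rule finite_intervals)
  have "(\<Sum>I\<in>?Int. (\<Sum>J\<in>{J\<in>?Int. I \<subseteq> J}. mobius m n I J * d J)
            * (if i \<in> I \<and> j \<in> I then 1 else 0))
      = (\<Sum>I\<in>?Int. if ?R \<subseteq> I then (\<Sum>J\<in>{J\<in>?Int. I \<subseteq> J}. mobius m n I J * d J) else 0)"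
    by (rule sum.cong) (auto simp: iff)
  also have "\<dots> = (\<Sum>I\<in>{I\<in>?Int. ?R \<subseteq> I}. \<Sum>J\<in>{J\<in>?Int. I \<subseteq> J}. mobius m n I J * d J)"
    by (rule sum.inter_filter[OF fin, symmetric])
  also have "\<dots> = (\<Sum>J\<in>?Int. \<Sum>I\<in>{I\<in>{I\<in>?Int. ?R \<subseteq> I}. I \<subseteq> J}. mobius m n I J * d J)"
    by (rule sum.swap_restrict) (use fin in auto)
  also have "\<dots> = (\<Sum>J\<in>?Int. (\<Sum>I\<in>Iv m n ?R J. mobius m n I J) * d J)"
    by (rule sum.cong) (auto simp: Iv_def sum_distrib_right intro!: sum.cong)
  also have "\<dots> = (\<Sum>J\<in>?Int. if J = ?R then d J else 0)"
  proof (rule sum.cong[OF refl])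
    fix J assume J: "J \<in> ?Int"
    show "(\<Sum>I\<in>Iv m n ?R J. mobius m n I J) * d J = (if J = ?R then d J else 0)"
    proof (cases "?R \<subseteq> J")
      case True
      then show ?thesis using mobius_sum_right[OF RI J True] by auto
    next
      case False
      then have "Iv m n ?R J = {}" by (auto simp: Iv_def)
      then show ?thesis using False by auto
    qed
  qed
  also have "\<dots> = d ?R" using fin RI by (simp add: sum.delta')
  finally show ?thesis .
qed




definition hok :: "'k::field grid_rep \<Rightarrow> nat \<Rightarrow> nat \<Rightarrow> nat \<Rightarrow> bool" where
  "hok M a b l \<longleftrightarrow> (\<forall>t<l. hmap M (a, b+t) \<in> carrier_mat (rdim M (a, b+t+1)) (rdim M (a, b+t)))"
definition vok :: "'k::field grid_rep \<Rightarrow> nat \<Rightarrow> nat \<Rightarrow> nat \<Rightarrow> bool" where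
  "vok M a b l \<longleftrightarrow> (\<forall>t<l. vmap M (a+t, b) \<in> carrier_mat (rdim M (a+t+1, b)) (rdim M (a+t, b)))"

lemma hcomp_carrier: "hok M a b l \<Longrightarrow> hcomp M a b l \<in> carrier_mat (rdim M (a,b+l)) (rdim M (a,b))"
  by (induction l) (auto simp: hok_def)

lemma vcomp_carrier: "vok M a b l \<Longrightarrow> vcomp M a b l \<in> carrier_mat (rdim M (a+l,b)) (rdim M (a,b))"
  by (induction l) (auto simp: vok_def)

lemma hok_mono: "hok M a b l \<Longrightarrow> l' \<le> l \<Longrightarrow> hok M a b l'"
  by (auto simp: hok_def)
lemma vok_mono: "vok M a b l \<Longrightarrow> l' \<le> l \<Longrightarrow> vok M a b l'"
  by (auto simp: vok_def)

lemma hok_shift: "hok M a b (l1 + l2) \<Longrightarrow> hok M a (b + l1) l2"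
  by (auto simp: hok_def) (metis add.assoc add_less_cancel_left)
lemma vok_shift: "vok M a b (l1 + l2) \<Longrightarrow> vok M (a + l1) b l2"
  by (auto simp: vok_def) (metis add.assoc add_less_cancel_left)

lemma hcomp_add:
  assumes "hok M a b (l1 + l2)"
  shows "hcomp M a b (l1 + l2) = hcomp M a (b + l1) l2 * hcomp M a b l1"
  using assms
proof (induction l2)
  case 0
  have "hcomp M a b l1 \<in> carrier_mat (rdim M (a,b+l1)) (rdim M (a,b))"
    using hcomp_carrier[OF hok_mono[OF 0]] by simp
  then show ?case by simp
next
  case (Suc l2)
  have ok: "hok M a b (l1 + l2)" using hok_mono[OF Suc.prems] by simp
  have c1: "hcomp M a b l1 \<in> carrier_mat (rdim M (a,b+l1)) (rdim M (a,b))"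
    using hcomp_carrier[OF hok_mono[OF ok]] by simp
  have c2: "hcomp M a (b+l1) l2 \<in> carrier_mat (rdim M (a,b+(l1+l2))) (rdim M (a,b+l1))"
    using hcomp_carrier[OF hok_shift[OF ok]] by (simp add: add.assoc)
  have c3: "hmap M (a, b+(l1+l2)) \<in> carrier_mat (rdim M (a,b+(l1+l2)+1)) (rdim M (a,b+(l1+l2)))"
    using Suc.prems by (auto simp: hok_def)
  have "hcomp M a b (l1 + Suc l2) = hmap M (a, b+(l1+l2)) * hcomp M a b (l1 + l2)" by simp
  also have "\<dots> = hmap M (a, b+(l1+l2)) * (hcomp M a (b + l1) l2 * hcomp M a b l1)"
    using Suc.IH ok by simp
  also have "\<dots> = (hmap M (a, b+(l1+l2)) * hcomp M a (b + l1) l2) * hcomp M a b l1"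
    using assoc_mult_mat[OF c3 c2 c1] by (simp add: add.assoc)
  also have "\<dots> = hcomp M a (b + l1) (Suc l2) * hcomp M a b l1" by (simp add: add.assoc)
  finally show ?case .
qed

lemma vcomp_add:
  assumes "vok M a b (l1 + l2)"
  shows "vcomp M a b (l1 + l2) = vcomp M (a + l1) b l2 * vcomp M a b l1"
  using assms
proof (induction l2)
  case 0
  have "vcomp M a b l1 \<in> carrier_mat (rdim M (a+l1,b)) (rdim M (a,b))"
    using vcomp_carrier[OF vok_mono[OF 0]] by simp
  then show ?case by simp
next
  case (Suc l2)
  have ok: "vok M a b (l1 + l2)" using vok_mono[OF Suc.prems] by simp
  have c1: "vcomp M a b l1 \<in> carrier_mat (rdim M (a+l1,b)) (rdim M (a,b))"
    using vcomp_carrier[OF vok_mono[OF ok]] by simp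
  have c2: "vcomp M (a+l1) b l2 \<in> carrier_mat (rdim M (a+(l1+l2),b)) (rdim M (a+l1,b))"
    using vcomp_carrier[OF vok_shift[OF ok]] by (simp add: add.assoc)
  have c3: "vmap M (a+(l1+l2), b) \<in> carrier_mat (rdim M (a+(l1+l2)+1,b)) (rdim M (a+(l1+l2),b))"
    using Suc.prems by (auto simp: vok_def)
  have "vcomp M a b (l1 + Suc l2) = vmap M (a+(l1+l2), b) * vcomp M a b (l1 + l2)" by simp
  also have "\<dots> = vmap M (a+(l1+l2), b) * (vcomp M (a + l1) b l2 * vcomp M a b l1)"
    using Suc.IH ok by simp
  also have "\<dots> = (vmap M (a+(l1+l2), b) * vcomp M (a + l1) b l2) * vcomp M a b l1"
    using assoc_mult_mat[OF c3 c2 c1] by (simp add: add.assoc)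
  also have "\<dots> = vcomp M (a + l1) b (Suc l2) * vcomp M a b l1" by (simp add: add.assoc)
  finally show ?case .
qed

context
  fixes m n :: nat and M :: "'k::field grid_rep"
  assumes rep: "is_grid_rep m n M"
begin

lemma rep_hok: "1 \<le> a \<Longrightarrow> a \<le> m \<Longrightarrow> 1 \<le> b \<Longrightarrow> b + l \<le> n \<Longrightarrow> hok M a b l"
  using rep by (auto simp: hok_def is_grid_rep_def)

lemma rep_vok: "1 \<le> a \<Longrightarrow> a + l \<le> m \<Longrightarrow> 1 \<le> b \<Longrightarrow> b \<le> n \<Longrightarrow> vok M a b l"
  using rep by (auto simp: vok_def is_grid_rep_def)

lemma strip:
  assumes "1 \<le> a" "a + p \<le> m" "1 \<le> b" "b + 1 \<le> n"
  shows "hmap M (a+p, b) * vcomp M a b p = vcomp M a (b+1) p * hmap M (a,b)"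
  using assms
proof (induction p)
  case 0
  have "hmap M (a,b) \<in> carrier_mat (rdim M (a,b+1)) (rdim M (a,b))"
    using rep 0 by (auto simp: is_grid_rep_def)
  then show ?case by simp
next
  case (Suc p)
  have IH: "hmap M (a+p, b) * vcomp M a b p = vcomp M a (b+1) p * hmap M (a,b)"
    using Suc by simp
  have cV: "vcomp M a b p \<in> carrier_mat (rdim M (a+p,b)) (rdim M (a,b))"
    using vcomp_carrier[OF rep_vok] Suc.prems by simp
  have cV1: "vcomp M a (b+1) p \<in> carrier_mat (rdim M (a+p,b+1)) (rdim M (a,b+1))"
    using vcomp_carrier[OF rep_vok] Suc.prems by simp
  have cH0: "hmap M (a,b) \<in> carrier_mat (rdim M (a,b+1)) (rdim M (a,b))"
    using rep Suc.prems by (auto simp: is_grid_rep_def)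
  have cH: "hmap M (a+p,b) \<in> carrier_mat (rdim M (a+p,b+1)) (rdim M (a+p,b))"
    using rep Suc.prems by (auto simp: is_grid_rep_def)
  have cH': "hmap M (a+p+1,b) \<in> carrier_mat (rdim M (a+p+1,b+1)) (rdim M (a+p+1,b))"
    using rep Suc.prems by (auto simp: is_grid_rep_def)
  have cv: "vmap M (a+p,b) \<in> carrier_mat (rdim M (a+p+1,b)) (rdim M (a+p,b))"
    using rep Suc.prems by (auto simp: is_grid_rep_def)
  have cv1: "vmap M (a+p,b+1) \<in> carrier_mat (rdim M (a+p+1,b+1)) (rdim M (a+p,b+1))"
    using rep Suc.prems by (auto simp: is_grid_rep_def)
  have sq: "hmap M (a+p+1, b) * vmap M (a+p, b) = vmap M (a+p, b+1) * hmap M (a+p, b)"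
    using rep Suc.prems by (auto simp: is_grid_rep_def)
  have "hmap M (a + Suc p, b) * vcomp M a b (Suc p) = hmap M (a+p+1, b) * (vmap M (a+p, b) * vcomp M a b p)"
    by simp
  also have "\<dots> = (hmap M (a+p+1, b) * vmap M (a+p, b)) * vcomp M a b p"
    using assoc_mult_mat[OF cH' cv cV] by simp
  also have "\<dots> = (vmap M (a+p, b+1) * hmap M (a+p, b)) * vcomp M a b p" by (simp only: sq)
  also have "\<dots> = vmap M (a+p, b+1) * (hmap M (a+p, b) * vcomp M a b p)"
    using assoc_mult_mat[OF cv1 cH cV] .
  also have "\<dots> = vmap M (a+p, b+1) * (vcomp M a (b+1) p * hmap M (a,b))" by (simp only: IH)
  also have "\<dots> = (vmap M (a+p, b+1) * vcomp M a (b+1) p) * hmap M (a,b)"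
    using assoc_mult_mat[OF cv1 cV1 cH0] by simp
  also have "\<dots> = vcomp M a (b+1) (Suc p) * hmap M (a,b)" by simp
  finally show ?case .
qed

lemma rect_comm:
  assumes "1 \<le> a" "a + p \<le> m" "1 \<le> b" "b + q \<le> n"
  shows "hcomp M (a+p) b q * vcomp M a b p = vcomp M a (b+q) p * hcomp M a b q"
  using assms
proof (induction q)
  case 0
  have "vcomp M a b p \<in> carrier_mat (rdim M (a+p,b)) (rdim M (a,b))"
    using vcomp_carrier[OF rep_vok] 0 by simp
  then show ?case by simp
next
  case (Suc q)
  have IH: "hcomp M (a+p) b q * vcomp M a b p = vcomp M a (b+q) p * hcomp M a b q"
    using Suc by simp
  have cV: "vcomp M a b p \<in> carrier_mat (rdim M (a+p,b)) (rdim M (a,b))"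
    using vcomp_carrier[OF rep_vok] Suc.prems by simp
  have cVq: "vcomp M a (b+q) p \<in> carrier_mat (rdim M (a+p,b+q)) (rdim M (a,b+q))"
    using vcomp_carrier[OF rep_vok] Suc.prems by simp
  have cVq1: "vcomp M a (b+q+1) p \<in> carrier_mat (rdim M (a+p,b+q+1)) (rdim M (a,b+q+1))"
    using vcomp_carrier[OF rep_vok] Suc.prems by simp
  have cHp: "hcomp M (a+p) b q \<in> carrier_mat (rdim M (a+p,b+q)) (rdim M (a+p,b))"
    using hcomp_carrier[OF rep_hok] Suc.prems by simp
  have cH: "hcomp M a b q \<in> carrier_mat (rdim M (a,b+q)) (rdim M (a,b))"
    using hcomp_carrier[OF rep_hok] Suc.prems by simp
  have ch: "hmap M (a+p,b+q) \<in> carrier_mat (rdim M (a+p,b+q+1)) (rdim M (a+p,b+q))"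
    using rep Suc.prems by (auto simp: is_grid_rep_def)
  have ch0: "hmap M (a,b+q) \<in> carrier_mat (rdim M (a,b+q+1)) (rdim M (a,b+q))"
    using rep Suc.prems by (auto simp: is_grid_rep_def)
  have st: "hmap M (a+p, b+q) * vcomp M a (b+q) p = vcomp M a (b+q+1) p * hmap M (a,b+q)"
    using strip[of a p "b+q"] Suc.prems by simp
  have "hcomp M (a+p) b (Suc q) * vcomp M a b p = (hmap M (a+p, b+q) * hcomp M (a+p) b q) * vcomp M a b p"
    by simp
  also have "\<dots> = hmap M (a+p, b+q) * (hcomp M (a+p) b q * vcomp M a b p)"
    using assoc_mult_mat[OF ch cHp cV] .
  also have "\<dots> = hmap M (a+p, b+q) * (vcomp M a (b+q) p * hcomp M a b q)" by (simp only: IH)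
  also have "\<dots> = (hmap M (a+p, b+q) * vcomp M a (b+q) p) * hcomp M a b q"
    using assoc_mult_mat[OF ch cVq cH] by simp
  also have "\<dots> = (vcomp M a (b+q+1) p * hmap M (a,b+q)) * hcomp M a b q" by (simp only: st)
  also have "\<dots> = vcomp M a (b+q+1) p * (hmap M (a,b+q) * hcomp M a b q)"
    using assoc_mult_mat[OF cVq1 ch0 cH] .
  also have "\<dots> = vcomp M a (b + Suc q) p * hcomp M a b (Suc q)" by simp
  finally show ?case .
qed

lemma path_map_carrier:
  assumes "grid_path m n s t"
  shows "path_map M s t \<in> carrier_mat (rdim M t) (rdim M s)"
proof -
  obtain a b c d where s: "s = (a,b)" and t: "t = (c,d)" by (cases s, cases t)
  have g: "1 \<le> a" "a \<le> c" "c \<le> m" "1 \<le> b" "b \<le> d" "d \<le> n"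
    using assms by (auto simp: grid_path_iff grid_vertices_def s t)
  have "hcomp M c b (d - b) \<in> carrier_mat (rdim M (c, b + (d-b))) (rdim M (c,b))"
    using g by (intro hcomp_carrier rep_hok) auto
  moreover have "vcomp M a b (c - a) \<in> carrier_mat (rdim M (a + (c-a), b)) (rdim M (a,b))"
    using g by (intro vcomp_carrier rep_vok) auto
  ultimately show ?thesis using g by (simp add: path_map_def s t)
qed

lemma path_map_comp:
  assumes "grid_path m n s t" "grid_path m n t u"
  shows "path_map M t u * path_map M s t = path_map M s u"
proof -
  obtain a b c d e f where s: "s = (a,b)" and t: "t = (c,d)" and u: "u = (e,f)"
    by (cases s, cases t, cases u)
  have g: "1 \<le> a" "a \<le> c" "c \<le> e" "e \<le> m" "1 \<le> b" "b \<le> d" "d \<le> f" "f \<le> n"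
    using assms by (auto simp: grid_path_iff grid_vertices_def s t u)
  define H1 where "H1 = hcomp M e d (f - d)"
  define V1 where "V1 = vcomp M c d (e - c)"
  define H2 where "H2 = hcomp M c b (d - b)"
  define V2 where "V2 = vcomp M a b (c - a)"
  define H3 where "H3 = hcomp M e b (d - b)"
  define V3 where "V3 = vcomp M c b (e - c)"
  have cH1: "H1 \<in> carrier_mat (rdim M (e,f)) (rdim M (e,d))"
    using hcomp_carrier[OF rep_hok, of e d "f-d"] g by (simp add: H1_def)
  have cV1: "V1 \<in> carrier_mat (rdim M (e,d)) (rdim M (c,d))"
    using vcomp_carrier[OF rep_vok, of c "e-c" d] g by (simp add: V1_def)
  have cH2: "H2 \<in> carrier_mat (rdim M (c,d)) (rdim M (c,b))"
    using hcomp_carrier[OF rep_hok, of c b "d-b"] g by (simp add: H2_def)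
  have cV2: "V2 \<in> carrier_mat (rdim M (c,b)) (rdim M (a,b))"
    using vcomp_carrier[OF rep_vok, of a "c-a" b] g by (simp add: V2_def)
  have cH3: "H3 \<in> carrier_mat (rdim M (e,d)) (rdim M (e,b))"
    using hcomp_carrier[OF rep_hok, of e b "d-b"] g by (simp add: H3_def)
  have cV3: "V3 \<in> carrier_mat (rdim M (e,b)) (rdim M (c,b))"
    using vcomp_carrier[OF rep_vok, of c "e-c" b] g by (simp add: V3_def)
  have comm: "H3 * V3 = V1 * H2"
    using rect_comm[of c "e-c" b "d-b"] g by (simp add: H3_def V3_def V1_def H2_def)
  have hadd: "hcomp M e b (f - b) = H1 * H3"
    using hcomp_add[OF rep_hok, of e b "d-b" "f-d"] g by (simp add: H1_def H3_def)
  have vadd: "vcomp M a b (e - a) = V3 * V2"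
    using vcomp_add[OF rep_vok, of a "c-a" "e-c" b] g by (simp add: V2_def V3_def)
  have "path_map M t u * path_map M s t = (H1 * V1) * (H2 * V2)"
    by (simp add: path_map_def s t u H1_def V1_def H2_def V2_def)
  also have "\<dots> = H1 * (V1 * (H2 * V2))"
    using assoc_mult_mat[OF cH1 cV1 mult_carrier_mat[OF cH2 cV2]] .
  also have "\<dots> = H1 * ((V1 * H2) * V2)"
    using assoc_mult_mat[OF cV1 cH2 cV2] by simp
  also have "\<dots> = H1 * ((H3 * V3) * V2)" by (simp add: comm)
  also have "\<dots> = H1 * (H3 * (V3 * V2))"
    using assoc_mult_mat[OF cH3 cV3 cV2] by simp
  also have "\<dots> = (H1 * H3) * (V3 * V2)"
    using assoc_mult_mat[OF cH1 cH3 mult_carrier_mat[OF cV3 cV2]] by simp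
  also have "\<dots> = path_map M s u" by (simp add: path_map_def s u hadd vadd)
  finally show ?thesis .
qed

end




lemma ir_rdim: "rdim (interval_rep I :: 'k::field grid_rep) x = (if x \<in> I then 1 else 0)"
  by (simp add: interval_rep_def)

lemma ir_hmap_carrier:
  "hmap (interval_rep I :: 'k::field grid_rep) (a,b) \<in> carrier_mat (rdim (interval_rep I :: 'k grid_rep) (a,b+1)) (rdim (interval_rep I :: 'k grid_rep) (a,b))"
  by (simp add: interval_rep_def)

lemma ir_vmap_carrier:
  "vmap (interval_rep I :: 'k::field grid_rep) (a,b) \<in> carrier_mat (rdim (interval_rep I :: 'k grid_rep) (a+1,b)) (rdim (interval_rep I :: 'k grid_rep) (a,b))"
  by (simp add: interval_rep_def)

lemma ir_hok: "hok (interval_rep I :: 'k::field grid_rep) a b l"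
  unfolding hok_def using ir_hmap_carrier by (metis add.assoc)

lemma ir_vok: "vok (interval_rep I :: 'k::field grid_rep) a b l"
  unfolding vok_def using ir_vmap_carrier by metis

lemma ir_hcomp_one:
  "(\<And>t. t \<le> l \<Longrightarrow> (a, b+t) \<in> I) \<Longrightarrow> hcomp (interval_rep I :: 'k::field grid_rep) a b l = 1\<^sub>m 1"
proof (induction l)
  case 0 then show ?case by (auto simp: interval_rep_def)
next
  case (Suc l)
  have "(a, b+l) \<in> I" "(a, b+l+1) \<in> I" using Suc.prems[of l] Suc.prems[of "Suc l"] by auto
  then have "hmap (interval_rep I :: 'k grid_rep) (a, b+l) = 1\<^sub>m 1" by (simp add: interval_rep_def)
  then show ?case using Suc by simp
qed

lemma ir_vcomp_one:
  "(\<And>t. t \<le> l \<Longrightarrow> (a+t, b) \<in> I) \<Longrightarrow> vcomp (interval_rep I :: 'k::field grid_rep) a b l = 1\<^sub>m 1"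
proof (induction l)
  case 0 then show ?case by (auto simp: interval_rep_def)
next
  case (Suc l)
  have "(a+l, b) \<in> I" "(a+l+1, b) \<in> I" using Suc.prems[of l] Suc.prems[of "Suc l"] by auto
  then have "vmap (interval_rep I :: 'k grid_rep) (a+l, b) = 1\<^sub>m 1" by (simp add: interval_rep_def)
  then show ?case using Suc by simp
qed

lemma ir_path_one:
  assumes "is_interval m n I" "s \<in> I" "t \<in> I" "fst s \<le> fst t" "snd s \<le> snd t"
  shows "path_map (interval_rep I :: 'k::field grid_rep) s t = 1\<^sub>m 1"
proof -
  have R: "rect s t \<subseteq> I" using rect_sub_interval assms(1-3) .
  obtain a b c d where s: "s = (a,b)" and t: "t = (c,d)" by (cases s, cases t)
  have "hcomp (interval_rep I :: 'k grid_rep) c b (d - b) = 1\<^sub>m 1"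
    by (rule ir_hcomp_one, rule subsetD[OF R]) (use assms(4,5) in \<open>auto simp: rect_def s t\<close>)
  moreover have "vcomp (interval_rep I :: 'k grid_rep) a b (c - a) = 1\<^sub>m 1"
    by (rule ir_vcomp_one, rule subsetD[OF R]) (use assms(4,5) in \<open>auto simp: rect_def s t\<close>)
  ultimately show ?thesis by (simp add: path_map_def s t)
qed

lemma ir_path_carrier:
  assumes "fst s \<le> fst t" "snd s \<le> snd t"
  shows "path_map (interval_rep I :: 'k::field grid_rep) s t \<in>
     carrier_mat (rdim (interval_rep I :: 'k grid_rep) t) (rdim (interval_rep I :: 'k grid_rep) s)"
proof -
  obtain a b c d where s: "s = (a,b)" and t: "t = (c,d)" by (cases s, cases t)
  have "hcomp (interval_rep I :: 'k grid_rep) c b (d - b) \<in> carrier_mat (rdim (interval_rep I :: 'k grid_rep) (c, b + (d-b))) (rdim (interval_rep I :: 'k grid_rep) (c,b))"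
    by (rule hcomp_carrier[OF ir_hok])
  moreover have "vcomp (interval_rep I :: 'k grid_rep) a b (c - a) \<in> carrier_mat (rdim (interval_rep I :: 'k grid_rep) (a + (c-a), b)) (rdim (interval_rep I :: 'k grid_rep) (a,b))"
    by (rule vcomp_carrier[OF ir_vok])
  ultimately show ?thesis using assms by (simp add: path_map_def s t)
qed




lemma rank_one1: "mat_rank (1\<^sub>m 1 :: 'k::field mat) = 1"
proof -
  interpret vec_space "TYPE('k)" 1 .
  have "det (1\<^sub>m 1 :: 'k mat) \<noteq> 0" by simp
  then show ?thesis using det_rank_iff[of "1\<^sub>m 1"] by (simp add: mat_rank_def)
qed

lemma rank_col0: "(A :: 'k::field mat) \<in> carrier_mat r 0 \<Longrightarrow> mat_rank A = 0"
proof -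
  assume A: "A \<in> carrier_mat r 0"
  interpret vec_space "TYPE('k)" r .
  show ?thesis using rank_le_nc[OF A] A by (simp add: mat_rank_def)
qed

lemma rank_row0: "(A :: 'k::field mat) \<in> carrier_mat 0 c \<Longrightarrow> mat_rank A = 0"
proof -
  assume A: "A \<in> carrier_mat 0 c"
  interpret vec_space "TYPE('k)" 0 .
  have "A = 0\<^sub>m 0 c" using A by (intro eq_matI) auto
  then show ?thesis using rank_0I[of c] A by (simp add: mat_rank_def)
qed

lemma rank_mult_le:
  fixes F :: "'k::field mat"
  assumes F: "F \<in> carrier_mat n nc" and G: "G \<in> carrier_mat nc k"
  shows "vec_space.rank n (F * G) \<le> vec_space.rank n F"
proof -
  interpret vec_space "TYPE('k)" n .
  define W where "W = span (set (cols F))"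
  have FG: "F * G \<in> carrier_mat n k" using F G by simp
  have sub: "set (cols (F*G)) \<subseteq> W"
  proof
    fix x assume "x \<in> set (cols (F*G))"
    then obtain l where l: "l < k" "x = col (F*G) l" using FG by (auto simp: in_set_conv_nth)
    then have x: "x = F *\<^sub>v col G l" using col_mult2[OF F G l(1)] by simp
    have "col G l \<in> carrier_vec (dim_col F)" unfolding carrier_vec_def using F G by simp
    then show "x \<in> W" unfolding W_def using col_space_eq[OF F] x F
      by (auto simp: col_space_def)
  qed
  have sW: "subspace class_ring W V"
    using span_is_subspace W_def F cols_dim carrier_matD by auto
  then have "span (set (cols (F*G))) \<subseteq> W"
    using sub span_is_subset by (simp add: subspace_def)
  have "subspace class_ring (span (set (cols (F*G)))) V"
    by (metis FG cols_dim carrier_matD(1) span_is_subspace)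
  have subspace: "subspace class_ring (span (set (cols (F*G)))) (vs W)"
    using nested_subspaces[OF sW \<open>subspace class_ring (span (set (cols (F*G)))) V\<close>
      \<open>span (set (cols (F*G))) \<subseteq> W\<close>] .
  have fin_dim: "vectorspace.fin_dim class_ring (vs W)"
    using W_def F fin_dim_span_cols by auto
  have "vectorspace.fin_dim class_ring (span_vs (set (cols (F*G))))"
    using FG fin_dim_span_cols by blast
  then have "rank (F*G) \<le> vectorspace.dim class_ring (vs W)" unfolding rank_def
    using vectorspace.subspace_dim[OF subspace_is_vs[OF sW] subspace fin_dim] by auto
  also have "\<dots> = rank F" unfolding rank_def W_def by simp
  finally show ?thesis .
qed

lemma rank_upper:
  fixes A :: "'k::field mat"
  assumes A: "A \<in> carrier_mat d1 d2" and B: "B \<in> carrier_mat d2 k" and C: "C \<in> carrier_mat k d1"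
    and CAB: "C * (A * B) = 1\<^sub>m k"
  shows "k \<le> mat_rank A"
proof -
  interpret vec_space "TYPE('k)" d1 .
  define X where "X = A * B"
  have X: "X \<in> carrier_mat d1 k" using A B by (simp add: X_def)
  have CX: "C * X = 1\<^sub>m k" using CAB by (simp add: X_def)
  have colX: "C *\<^sub>v col X a = unit_vec k a" if "a < k" for a
  proof -
    have "C *\<^sub>v col X a = col (C * X) a" by (rule col_mult2[OF C X that, symmetric])
    then show ?thesis using CX that by simp
  qed
  have dist: "distinct (cols X)"
  proof (subst distinct_conv_nth, intro allI impI)
    fix a b assume ab: "a < length (cols X)" "b < length (cols X)" "a \<noteq> b"
    then have "a < k" "b < k" using X by auto
    show "cols X ! a \<noteq> cols X ! b"
    proof
      assume "cols X ! a = cols X ! b"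
      then have "col X a = col X b" using \<open>a < k\<close> \<open>b < k\<close> X by simp
      then have "unit_vec k a = (unit_vec k b :: 'k vec)" using colX \<open>a < k\<close> \<open>b < k\<close> by metis
      then show False using \<open>a < k\<close> \<open>a \<noteq> b\<close> by simp
    qed
  qed
  have li: "lin_indpt (set (cols X))"
  proof (rule ccontr)
    assume "\<not> lin_indpt (set (cols X))"
    then obtain v where v: "v \<in> carrier_vec k" "v \<noteq> 0\<^sub>v k" "X *\<^sub>v v = 0\<^sub>v d1"
      using lin_depE[OF X _ dist] by blast
    have "v = (C * X) *\<^sub>v v" using CX v by simp
    also have "\<dots> = C *\<^sub>v (X *\<^sub>v v)" using C X v by simp
    also have "\<dots> = 0\<^sub>v k" using v C by (intro eq_vecI) (auto simp: scalar_prod_def)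
    finally show False using v by simp
  qed
  have "rank X = k" using lin_indpt_full_rank[OF X dist li] .
  moreover have "rank X \<le> rank A" unfolding X_def by (rule rank_mult_le[OF A B])
  ultimately show ?thesis using A by (simp add: mat_rank_def)
qed

lemma rank_lower:
  fixes A :: "'k::field mat"
  assumes A: "A \<in> carrier_mat d1 d2"
  shows "\<exists>B C. B \<in> carrier_mat d2 (mat_rank A) \<and> C \<in> carrier_mat (mat_rank A) d1 \<and>
            C * (A * B) = 1\<^sub>m (mat_rank A)"
proof -
  interpret vec_space "TYPE('k)" d1 .
  obtain S where maxS: "maximal S (\<lambda>T. T \<subseteq> set (cols A) \<and> lin_indpt T)"
    using maximal_exists[of "(\<lambda>T. T \<subseteq> set (cols A) \<and> lin_indpt T)" "card (set (cols A))" "{}"]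
    by (meson List.finite_set card_mono empty_iff empty_subsetI finite_lin_indpt2 rev_finite_subset)
  define r where "r = mat_rank A"
  have r: "r = card S" using rank_card_indpt[OF A maxS] A by (simp add: r_def mat_rank_def)
  have SA: "S \<subseteq> set (cols A)" and liS: "lin_indpt S" using maxS by (auto simp: maximal_def)
  have finS: "finite S" using SA finite_subset by blast
  have Sc: "S \<subseteq> carrier_vec d1" using SA A cols_dim by blast
  obtain xs where xs: "set xs = S" "distinct xs" using finite_distinct_list[OF finS] by blast
  have lxs: "length xs = r" using xs r distinct_card by fastforce
  let ?P = "\<lambda>T. S \<subseteq> T \<and> T \<subseteq> carrier_vec d1 \<and> lin_indpt T"
  have Pb: "finite T \<and> card T \<le> d1" if "?P T" for T
    using li_le_dim[OF fin_dim, of T] that dim_is_n by auto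
  obtain T where maxT: "maximal T ?P" using maximal_exists[of ?P d1 S] Pb Sc liS by blast
  have ST: "S \<subseteq> T" and Tc: "T \<subseteq> carrier_vec d1" and liT: "lin_indpt T"
    using maxT by (auto simp: maximal_def)
  have finT: "finite T" using Pb ST Tc liT by blast
  have "maximal T (\<lambda>S. S \<subseteq> carrier_vec d1 \<and> lin_indpt S)"
    unfolding maximal_def
  proof (intro conjI allI impI)
    show "T \<subseteq> carrier_vec d1" "lin_indpt T" using Tc liT by simp_all
    fix B assume Bh: "T \<subseteq> B \<and> B \<subseteq> carrier_vec d1 \<and> lin_indpt B"
    then have "?P B" using ST by auto
    moreover have "\<forall>B. T \<subseteq> B \<and> ?P B \<longrightarrow> B = T" using maxT unfolding maximal_def by blast
    ultimately show "B = T" using Bh by blast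
  qed
  then have "basis T" by (rule max_li_is_basis)
  then have cT: "card T = d1" using dim_basis[OF finT] dim_is_n by simp
  obtain ys where ys: "set ys = T - S" "distinct ys" using finite_distinct_list[of "T - S"] finT by blast
  define zs where "zs = xs @ ys"
  have zs: "set zs = T" "distinct zs" using xs ys ST by (auto simp: zs_def)
  have lzs: "length zs = d1" using zs cT distinct_card by fastforce
  define Y where "Y = mat_of_cols d1 zs"
  have Y: "Y \<in> carrier_mat d1 d1" using mat_of_cols_carrier(1)[of d1 zs] lzs by (simp add: Y_def)
  have cY: "cols Y = zs" using zs Tc by (simp add: Y_def)
  have "rank Y = d1" using lin_indpt_full_rank[OF Y] cY zs liT by simp
  then have "det Y \<noteq> 0" using det_rank_iff[OF Y] by simp
  then have "Y \<in> Units (ring_mat TYPE('k) d1 ())" by (rule det_non_zero_imp_unit[OF Y])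
  then obtain Z where Z: "Z \<in> carrier_mat d1 d1" and ZY: "Z * Y = 1\<^sub>m d1"
    by (auto simp: Units_def ring_mat_simps)
  define idx where "idx b = (SOME c. c < d2 \<and> col A c = xs ! b)" for b
  have idx: "idx b < d2 \<and> col A (idx b) = xs ! b" if "b < r" for b
  proof -
    have "xs ! b \<in> set (cols A)" using that lxs xs SA by auto
    then obtain c where "c < d2" "col A c = xs ! b" using A by (auto simp: in_set_conv_nth)
    then show ?thesis unfolding idx_def by (metis (mono_tags, lifting) someI)
  qed
  define B where "B = mat d2 r (\<lambda>(a,b). if a = idx b then 1 else (0::'k))"
  define C where "C = mat r d1 (\<lambda>(a,b). Z $$ (a,b))"
  have B: "B \<in> carrier_mat d2 r" by (simp add: B_def)
  have C: "C \<in> carrier_mat r d1" by (simp add: C_def)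
  have xsc: "xs ! b \<in> carrier_vec d1" if "b < r" for b using that lxs xs Sc by auto
  have AB: "A * B = mat_of_cols d1 xs"
  proof (rule eq_matI)
    fix c b assume cb: "c < dim_row (mat_of_cols d1 xs)" "b < dim_col (mat_of_cols d1 xs)"
    then have c: "c < d1" and b: "b < r" using lxs by auto
    have "(A * B) $$ (c,b) = (\<Sum>a = 0..<d2. A $$ (c,a) * (if a = idx b then 1 else 0))"
      using A B c b by (simp add: scalar_prod_def B_def)
    also have "\<dots> = (\<Sum>a = 0..<d2. if a = idx b then A $$ (c,a) else 0)"
      by (rule sum.cong) auto
    also have "\<dots> = A $$ (c, idx b)" using idx[OF b] by simp
    also have "\<dots> = col A (idx b) $ c" using A c idx[OF b] by (metis carrier_matD(1) carrier_matD(2) index_col)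
    also have "\<dots> = mat_of_cols d1 xs $$ (c,b)" using idx[OF b] c b lxs by (simp add: mat_of_cols_def)
    finally show "(A * B) $$ (c,b) = mat_of_cols d1 xs $$ (c,b)" .
  qed (use A B lxs in auto)
  have CX: "C * mat_of_cols d1 xs = 1\<^sub>m r"
  proof (rule eq_matI)
    fix a b assume ab: "a < dim_row (1\<^sub>m r :: 'k mat)" "b < dim_col (1\<^sub>m r :: 'k mat)"
    then have a: "a < r" and b: "b < r" by auto
    have rd: "r \<le> d1" using lxs lzs zs_def by simp
    have "(C * mat_of_cols d1 xs) $$ (a,b) = (\<Sum>c = 0..<d1. Z $$ (a,c) * xs ! b $ c)"
      using a b lxs by (simp add: scalar_prod_def C_def mat_of_cols_def)
    also have "\<dots> = (\<Sum>c = 0..<d1. Z $$ (a,c) * Y $$ (c,b))"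
      using b lxs lzs rd by (intro sum.cong) (auto simp: Y_def mat_of_cols_def zs_def nth_append)
    also have "\<dots> = (Z * Y) $$ (a,b)" using Z Y a b rd by (simp add: scalar_prod_def)
    also have "\<dots> = 1\<^sub>m r $$ (a,b)" using ZY a b rd by simp
    finally show "(C * mat_of_cols d1 xs) $$ (a,b) = 1\<^sub>m r $$ (a,b)" .
  qed (use C lxs in auto)
  show ?thesis using B C CX AB unfolding r_def[symmetric] by metis
qed




lemma mat_pow_sum_one: "mat_pow_sum k (1\<^sub>m 1 :: 'k::field mat) = 1\<^sub>m k"
proof (induction k)
  case 0 then show ?case by (auto intro!: eq_matI)
next
  case (Suc k)
  then show ?case using four_block_one_mat[of 1 k] by simp
qed

lemma mat_pow_sum_one': "mat_pow_sum k (1\<^sub>m (Suc 0) :: 'k::field mat) = 1\<^sub>m k"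
  using mat_pow_sum_one by (metis One_nat_def)

lemma rank_ir:
  assumes "is_interval m n I" "grid_path m n i j"
  shows "mat_rank (path_map (interval_rep I :: 'k::field grid_rep) i j) = (if i \<in> I \<and> j \<in> I then 1 else 0)"
proof -
  have le: "fst i \<le> fst j" "snd i \<le> snd j" using assms(2) by (auto simp: grid_path_iff)
  note c = ir_path_carrier[OF le, of I, where 'k='k]
  show ?thesis
  proof (cases "i \<in> I \<and> j \<in> I")
    case True
    then show ?thesis using ir_path_one[OF assms(1) _ _ le, where 'k='k] rank_one1 by simp
  next
    case False
    then show ?thesis
    proof (cases "i \<in> I")
      case True
      then have "j \<notin> I" using False by simp
      then show ?thesis using c rank_row0 False by (simp add: ir_rdim)
    next
      case False
      then show ?thesis using c rank_col0 by (simp add: ir_rdim)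
    qed
  qed
qed

context
  fixes m n :: nat and M :: "'k::field grid_rep" and k :: ess_kind and i j :: vertex
  assumes rep: "is_grid_rep m n M" and ij: "grid_path m n i j"
begin

lemma S_props:
  shows "i \<in> ess_vertices m n k (rect i j)" "j \<in> ess_vertices m n k (rect i j)"
    "\<And>s. s \<in> ess_vertices m n k (rect i j) \<Longrightarrow> grid_path m n i s \<and> grid_path m n s j \<and> s \<in> rect i j"
proof -
  show "i \<in> ess_vertices m n k (rect i j)" "j \<in> ess_vertices m n k (rect i j)"
    using ess_rect[OF ij] by auto
  fix s assume "s \<in> ess_vertices m n k (rect i j)"
  then have sR: "s \<in> rect i j" using ess_rect(3)[OF ij] by auto
  have "rect i j \<subseteq> grid_vertices m n" using rect_interval[OF ij] by (simp add: is_interval_def)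
  then show "grid_path m n i s \<and> grid_path m n s j \<and> s \<in> rect i j"
    using sR ij by (auto simp: grid_path_iff rect_def)
qed

lemma upper:
  assumes "summand_pow m n (ess_vertices m n k (rect i j)) k' (interval_rep (rect i j)) M"
  shows "k' \<le> mat_rank (path_map M i j)"
proof -
  let ?S = "ess_vertices m n k (rect i j)"
  let ?V = "interval_rep (rect i j) :: 'k grid_rep"
  obtain f g where fg: "\<forall>s\<in>?S. f s \<in> carrier_mat (rdim M s) (k' * rdim ?V s) \<and>
                    g s \<in> carrier_mat (k' * rdim ?V s) (rdim M s) \<and>
                    g s * f s = 1\<^sub>m (k' * rdim ?V s)"
     and nat: "\<forall>s\<in>?S. \<forall>t\<in>?S. grid_path m n s t \<longrightarrow>
                    path_map M s t * f s = f t * mat_pow_sum k' (path_map ?V s t) \<and>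
                    g t * path_map M s t = mat_pow_sum k' (path_map ?V s t) * g s"
    using assms unfolding summand_pow_def by blast
  have iS: "i \<in> ?S" and jS: "j \<in> ?S" using S_props by auto
  have iR: "i \<in> rect i j" "j \<in> rect i j" using S_props(3)[OF iS] S_props(3)[OF jS] by auto
  have rd: "rdim ?V i = 1" "rdim ?V j = 1" using iR by (auto simp: ir_rdim)
  have fi: "f i \<in> carrier_mat (rdim M i) k'" and gi: "g i \<in> carrier_mat k' (rdim M i)"
    and gfi: "g i * f i = 1\<^sub>m k'" using fg iS rd by auto
  have gj: "g j \<in> carrier_mat k' (rdim M j)" using fg jS rd by auto
  have le: "fst i \<le> fst j" "snd i \<le> snd j" using ij by (auto simp: grid_path_iff)
  have V1: "path_map ?V i j = 1\<^sub>m 1"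
    using ir_path_one[OF rect_interval[OF ij] iR le] .
  have "g j * path_map M i j = 1\<^sub>m k' * g i" using nat iS jS ij V1 by (simp add: mat_pow_sum_one mat_pow_sum_one')
  then have gA: "g j * path_map M i j = g i" using gi by simp
  have A: "path_map M i j \<in> carrier_mat (rdim M j) (rdim M i)" by (rule path_map_carrier[OF rep ij])
  have "g j * (path_map M i j * f i) = 1\<^sub>m k'"
    using assoc_mult_mat[OF gj A fi] gA gfi by simp
  then show ?thesis by (rule rank_upper[OF A fi gj])
qed

lemma lower:
  "summand_pow m n (ess_vertices m n k (rect i j)) (mat_rank (path_map M i j)) (interval_rep (rect i j)) M"
proof -
  let ?S = "ess_vertices m n k (rect i j)"
  let ?V = "interval_rep (rect i j) :: 'k grid_rep"
  let ?r = "mat_rank (path_map M i j)"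
  let ?P = "path_map M"
  have A: "?P i j \<in> carrier_mat (rdim M j) (rdim M i)" by (rule path_map_carrier[OF rep ij])
  obtain B C where B: "B \<in> carrier_mat (rdim M i) ?r" and C: "C \<in> carrier_mat ?r (rdim M j)"
    and CAB: "C * (?P i j * B) = 1\<^sub>m ?r" using rank_lower[OF A] by blast
  define f where "f s = ?P i s * B" for s
  define g where "g s = C * ?P s j" for s
  have sp: "grid_path m n i s" "grid_path m n s j" "rdim ?V s = 1" if "s \<in> ?S" for s
    using S_props(3)[OF that] by (auto simp: ir_rdim)
  have cP: "?P s t \<in> carrier_mat (rdim M t) (rdim M s)" if "grid_path m n s t" for s t
    by (rule path_map_carrier[OF rep that])
  have cf: "f s \<in> carrier_mat (rdim M s) ?r" if "s \<in> ?S" for s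
    using cP[OF sp(1)[OF that]] B by (simp add: f_def)
  have cg: "g s \<in> carrier_mat ?r (rdim M s)" if "s \<in> ?S" for s
    using cP[OF sp(2)[OF that]] C by (simp add: g_def)
  have gf: "g s * f s = 1\<^sub>m ?r" if "s \<in> ?S" for s
  proof -
    have "g s * f s = C * (?P s j * (?P i s * B))"
      using assoc_mult_mat[OF C cP[OF sp(2)[OF that]] mult_carrier_mat[OF cP[OF sp(1)[OF that]] B]]
      by (simp add: f_def g_def)
    also have "?P s j * (?P i s * B) = (?P s j * ?P i s) * B"
      using assoc_mult_mat[OF cP[OF sp(2)[OF that]] cP[OF sp(1)[OF that]] B] by simp
    also have "?P s j * ?P i s = ?P i j" using path_map_comp[OF rep sp(1,2)[OF that]] .
    finally show ?thesis using CAB by simp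
  qed
  have nat: "?P s t * f s = f t * mat_pow_sum ?r (path_map ?V s t) \<and>
             g t * ?P s t = mat_pow_sum ?r (path_map ?V s t) * g s"
    if s: "s \<in> ?S" and t: "t \<in> ?S" and st: "grid_path m n s t" for s t
  proof -
    have sR: "s \<in> rect i j" and tR: "t \<in> rect i j" using S_props(3) s t by auto
    have le: "fst s \<le> fst t" "snd s \<le> snd t" using st by (auto simp: grid_path_iff)
    have V1: "path_map ?V s t = 1\<^sub>m 1"
      using ir_path_one[OF rect_interval[OF ij] sR tR le] .
    have e1: "?P s t * f s = f t"
    proof -
      have "?P s t * f s = (?P s t * ?P i s) * B"
        using assoc_mult_mat[OF cP[OF st] cP[OF sp(1)[OF s]] B] by (simp add: f_def)
      also have "?P s t * ?P i s = ?P i t" using path_map_comp[OF rep sp(1)[OF s] st] .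
      finally show ?thesis by (simp add: f_def)
    qed
    have e2: "g t * ?P s t = g s"
    proof -
      have "g t * ?P s t = C * (?P t j * ?P s t)"
        using assoc_mult_mat[OF C cP[OF sp(2)[OF t]] cP[OF st]] by (simp add: g_def)
      also have "?P t j * ?P s t = ?P s j" using path_map_comp[OF rep st sp(2)[OF t]] .
      finally show ?thesis by (simp add: g_def)
    qed
    show ?thesis using e1 e2 V1 cf[OF t] cg[OF s] by (simp add: mat_pow_sum_one mat_pow_sum_one')
  qed
  show ?thesis unfolding summand_pow_def
    by (rule exI[of _ f], rule exI[of _ g]) (use cf cg gf nat sp(3) in auto)
qed

lemma compressed_rect: "compressed_mult m n k M (rect i j) = mat_rank (path_map M i j)"
  unfolding compressed_mult_def summand_mult_def
proof (rule Greatest_equality)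
  show "summand_pow m n (ess_vertices m n k (rect i j)) (mat_rank (path_map M i j)) (interval_rep (rect i j)) M"
    by (rule lower)
next
  fix y assume "summand_pow m n (ess_vertices m n k (rect i j)) y (interval_rep (rect i j)) M"
  then show "y \<le> mat_rank (path_map M i j)" by (rule upper)
qed

end

theorem mainTheorem15:
  fixes M :: "'k::field grid_rep" and m n :: nat and k :: ess_kind and i j :: vertex
  assumes "1 \<le> m" and "1 \<le> n"
    and "is_grid_rep m n M"
    and "grid_path m n i j"
  shows "(\<Sum>I \<in> intervals m n. tilde_mult m n k M I * int (mat_rank (path_map (interval_rep I :: 'k grid_rep) i j)))
         = int (mat_rank (path_map M i j))"
proof -
  define d where "d J = int (compressed_mult m n k M J)" for J
  have "(\<Sum>I \<in> intervals m n. tilde_mult m n k M I * int (mat_rank (path_map (interval_rep I :: 'k grid_rep) i j)))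
      = (\<Sum>I\<in>intervals m n. (\<Sum>J\<in>{J\<in>intervals m n. I \<subseteq> J}. mobius m n I J * d J)
            * (if i \<in> I \<and> j \<in> I then 1 else 0))"
  proof (rule sum.cong[OF refl])
    fix I assume "I \<in> intervals m n"
    then have "is_interval m n I" by (simp add: intervals_def)
    then show "tilde_mult m n k M I * int (mat_rank (path_map (interval_rep I :: 'k grid_rep) i j)) =
        (\<Sum>J\<in>{J\<in>intervals m n. I \<subseteq> J}. mobius m n I J * d J) * (if i \<in> I \<and> j \<in> I then 1 else 0)"
      using rank_ir[OF _ assms(4), where 'k='k] by (simp add: tilde_mult_def d_def)
  qed
  also have "\<dots> = d (rect i j)" by (rule mobius_collapse[OF assms(4)])
  also have "\<dots> = int (mat_rank (path_map M i j))"
    by (simp add: d_def compressed_rect[OF assms(3,4)])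
  finally show ?thesis .
qed


end
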